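(* Let $\mathcal{G}$ be a network of type $\mathcal{C}^1$ with exactly two stubborn agents $s_1,s_2$ and global communicator $m$, and let $\bar{G}_s$ be the signal flow graph derived from $\mathcal{G}$ as described in the context. Then, in $\bar{G}_s$: (1) for $i\in\{1,2\}$ and any node $e$, the sum of the path gains of all direct paths from $S_i$ to $e$ is at most $\dfrac{\beta_{s_i}(1-g_{e,e})}{1-g_{s_i,s_i}}$, and equality holds only when every simple path from $m$ to $e$ passes through $s_i$; (2) for any nodes $e,f$, the sum of the path gains of all direct paths from $e$ to $f$ is at most $\dfrac{1-g_{f,f}}{1-g_{e,e}}$, and equality holds only if every simple path from $m$ to $f$ passes through $e$.
   Context: Let $\mathcal{G}=(\mathcal{V},\mathcal{E})$, $\mathcal{V}=\{1,\dots,n\}$, be a directed graph, where an edge $(i,j)$ means information flows from $i$ to $j$. Its weighted adjacency matrix $W=[w_{ij}]$ is row-stochastic with $w_{ij}>0$ iff $(j,i)\in\mathcal{E}$ (self-loops allowed). Opinions follow the Friedkin–Johnsen model $\mathbf{x}(k+1)=(I-\beta)W\mathbf{x}(k)+\beta\mathbf{x}(0)$, $\beta=\mathrm{diag}(\beta_1,\dots,\beta_n)$, $\beta_i\in[0,1]$; exactly two agents $s_1,s_2$ are stubborn ($\beta_i>0$), with $\beta_{s_1},\beta_{s_2}\in(0,1)$. Type $\mathcal{C}^1$: $\mathcal{G}$ is strongly connected and some node $m$ lies on every cycle other than self-loops (a global communicator). A direct path is a path that does not pass through $m$. Signal flow graph: $G_s$ has nodes $1,\dots,n$ (node $i$ associated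 with the final opinion $x_i^*$ of agent $i$), two source nodes $S_1,S_2$ (initial opinions of $s_1,s_2$) and a sink $O$ (average final opinion), built from $\mathbf{x}^*=(I_n-\beta)W\mathbf{x}^*+\beta\mathbf{x}(0)$, $\bar{x}=\mathbb{1}_n^T\mathbf{x}^*/n$: for $i,j\in\{1,\dots,n\}$ there is a branch $(j,i)$ with gain $g_{i,j}=(1-\beta_i)w_{ij}$ whenever this is nonzero (so $g_{k,k}=(1-\beta_k)w_{kk}$ is the self-loop gain of $k$); there is a branch $(S_i,s_i)$ with gain $\beta_{s_i}$; and a branch $(j,O)$ with gain $1/n$ for each $j$. The graph $\bar{G}_s$ is obtained from $G_s$ by deleting every self-loop at a node $k$ and multiplying the gain of every outgoing branch of $k$ by $1/(1-g_{k,k})$. The gain of a path is the product of its branch gains (in $\bar{G}_s$); $g_{e,e}$ denotes the self-loop gain of $e$ in $G_s$. *)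

theory Defs
  imports Complex_Main
begin

(* Agents are the nodes 1..n. Graph G: edge relation E on {1..n}; (j,i) : E means
   information flows from j to i.  Node lists are used for paths/cycles. *)

definition chain_in :: "('a \<Rightarrow> 'a \<Rightarrow> bool) \<Rightarrow> 'a list \<Rightarrow> bool" where
  "chain_in R ps \<longleftrightarrow> (\<forall>k. Suc k < length ps \<longrightarrow> R (ps ! k) (ps ! Suc k))"

definition simple_path :: "(nat \<times> nat) set \<Rightarrow> nat list \<Rightarrow> nat \<Rightarrow> nat \<Rightarrow> bool" where
  "simple_path E ps a b \<longleftrightarrow> ps \<noteq> [] \<and> hd ps = a \<and> last ps = b \<and> distinct ps \<and>
     chain_in (\<lambda>u v. (u, v) \<in> E) ps"

definition is_cycle :: "(nat \<times> nat) set \<Rightarrow> nat list \<Rightarrow> bool" where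
  "is_cycle E cs \<longleftrightarrow> 2 \<le> length cs \<and> distinct cs \<and> chain_in (\<lambda>u v. (u, v) \<in> E) cs \<and>
     (last cs, hd cs) \<in> E"

definition strongly_connected :: "nat \<Rightarrow> (nat \<times> nat) set \<Rightarrow> bool" where
  "strongly_connected n E \<longleftrightarrow> (\<forall>i\<in>{1..n}. \<forall>j\<in>{1..n}. (i, j) \<in> E\<^sup>*)"

definition type_C1 :: "nat \<Rightarrow> (nat \<times> nat) set \<Rightarrow> nat \<Rightarrow> bool" where
  "type_C1 n E m \<longleftrightarrow> strongly_connected n E \<and> m \<in> {1..n} \<and>
     (\<forall>cs. is_cycle E cs \<longrightarrow> m \<in> set cs)"

(* branch gain of G_s from node j to node i:  g_{i,j} = (1 - beta_i) w_{ij} *)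
definition gain :: "(nat \<Rightarrow> nat \<Rightarrow> real) \<Rightarrow> (nat \<Rightarrow> real) \<Rightarrow> nat \<Rightarrow> nat \<Rightarrow> real" where
  "gain W \<beta> i j = (1 - \<beta> i) * W i j"

definition sfg_branch :: "(nat \<Rightarrow> nat \<Rightarrow> real) \<Rightarrow> (nat \<Rightarrow> real) \<Rightarrow> nat \<Rightarrow> nat \<Rightarrow> bool" where
  "sfg_branch W \<beta> j i \<longleftrightarrow> j \<noteq> i \<and> gain W \<beta> i j \<noteq> 0"

fun path_gain :: "(nat \<Rightarrow> nat \<Rightarrow> real) \<Rightarrow> (nat \<Rightarrow> real) \<Rightarrow> nat list \<Rightarrow> real" where
  "path_gain W \<beta> (u # v # vs) = gain W \<beta> v u / (1 - gain W \<beta> u u) * path_gain W \<beta> (v # vs)"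
| "path_gain W \<beta> _ = 1"

(* direct paths (no node equal to m) in bar G_s from agent node a to agent node b *)
definition direct_paths ::
  "nat \<Rightarrow> (nat \<Rightarrow> nat \<Rightarrow> real) \<Rightarrow> (nat \<Rightarrow> real) \<Rightarrow> nat \<Rightarrow> nat \<Rightarrow> nat \<Rightarrow> nat list set" where
  "direct_paths n W \<beta> m a b = {ps. ps \<noteq> [] \<and> hd ps = a \<and> last ps = b \<and> distinct ps \<and>
     set ps \<subseteq> {1..n} \<and> m \<notin> set ps \<and> chain_in (sfg_branch W \<beta>) ps}"

end

theory Submission
  imports Defs
begin


lemma chain_succ: "chain_in R xs \<longleftrightarrow> successively R xs"
  by (simp add: chain_in_def successively_conv_nth)

lemma pg_snoc: "qs \<noteq> [] \<Longrightarrow> path_gain W \<beta> (qs @ [y]) =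
   path_gain W \<beta> qs * (gain W \<beta> y (last qs) / (1 - gain W \<beta> (last qs) (last qs)))"
proof (induction qs)
  case Nil then show ?case by simp
next
  case (Cons x qs)
  show ?case
  proof (cases qs)
    case Nil then show ?thesis by simp
  next
    case (Cons z zs)
    then show ?thesis using Cons.IH by simp
  qed
qed

locale fj =
  fixes n :: nat and W :: "nat \<Rightarrow> nat \<Rightarrow> real" and \<beta> :: "nat \<Rightarrow> real"
    and E :: "(nat \<times> nat) set" and m :: nat
  assumes E_sub: "E \<subseteq> {1..n} \<times> {1..n}"
    and W_E: "\<forall>i\<in>{1..n}. \<forall>j\<in>{1..n}. (0 < W i j \<longleftrightarrow> (j, i) \<in> E)"
    and W_nonneg: "\<forall>i\<in>{1..n}. \<forall>j\<in>{1..n}. 0 \<le> W i j"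
    and W_row: "\<forall>i\<in>{1..n}. (\<Sum>j=1..n. W i j) = 1"
    and beta: "\<forall>i\<in>{1..n}. 0 \<le> \<beta> i \<and> \<beta> i < 1"
    and sc: "strongly_connected n E"
    and n2: "2 \<le> n"
    and m_in: "m \<in> {1..n}"
begin

abbreviation g where "g i j \<equiv> gain W \<beta> i j"

definition D where "D k e y = {ps \<in> direct_paths n W \<beta> m e y. length ps \<le> k}"
definition P where "P k e y = (\<Sum>ps\<in>D k e y. path_gain W \<beta> ps)"
definition c where "c e y = (1 - g y y) / (1 - g e e)"

lemma gain_nonneg: "i \<in> {1..n} \<Longrightarrow> j \<in> {1..n} \<Longrightarrow> 0 \<le> g i j"
proof -
  assume a: "i \<in> {1..n}" "j \<in> {1..n}"
  have "0 \<le> 1 - \<beta> i" using bspec[OF beta a(1)] by simp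
  moreover have "0 \<le> W i j" using bspec[OF bspec[OF W_nonneg a(1)] a(2)] by simp
  ultimately show ?thesis by (simp add: gain_def)
qed

lemma W_le1: assumes "i \<in> {1..n}" "j \<in> {1..n}" shows "W i j \<le> 1"
proof -
  have "W i j \<le> (\<Sum>j=1..n. W i j)"
    by (rule member_le_sum) (use assms W_nonneg in auto)
  then show ?thesis using W_row assms by simp
qed

lemma rt_in_edge: "(j, y) \<in> E\<^sup>* \<Longrightarrow> j \<noteq> y \<Longrightarrow> \<exists>u. u \<noteq> y \<and> (u, y) \<in> E"
proof (induction rule: rtrancl_induct)
  case base then show ?case by simp
next
  case (step z y)
  then show ?case by (cases "z = y") auto
qed

lemma in_edge: assumes v: "v \<in> {1..n}" shows "\<exists>u\<in>{1..n}. u \<noteq> v \<and> (u, v) \<in> E"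
proof -
  obtain j where j: "j \<in> {1..n}" "j \<noteq> v"
  proof (cases "v = 1")
    case True then show ?thesis using that[of 2] n2 by auto
  next
    case False then show ?thesis using that[of 1] n2 v by auto
  qed
  then have "(j, v) \<in> E\<^sup>*" using sc v unfolding strongly_connected_def by blast
  then obtain u where "u \<noteq> v" "(u, v) \<in> E" using rt_in_edge j by blast
  then show ?thesis using E_sub by blast
qed

lemma Wvv_lt1: assumes v: "v \<in> {1..n}" shows "W v v < 1"
proof -
  obtain u where u: "u \<in> {1..n}" "u \<noteq> v" "(u, v) \<in> E" using in_edge v by blast
  have pos: "0 < W v u" using W_E u v by blast
  have "(\<Sum>j\<in>{v,u}. W v j) \<le> (\<Sum>j=1..n. W v j)"
    by (rule sum_mono2) (use u v W_nonneg in auto)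
  then show ?thesis using pos W_row v u by simp
qed

lemma gvv_lt1: assumes v: "v \<in> {1..n}" shows "g v v < 1"
proof -
  have "g v v \<le> W v v" unfolding gain_def
    using mult_left_le_one_le[of "W v v" "1 - \<beta> v"] bspec[OF beta v]
      bspec[OF bspec[OF W_nonneg v] v] by simp
  then show ?thesis using Wvv_lt1[OF v] by simp
qed

lemma c_pos: "e \<in> {1..n} \<Longrightarrow> y \<in> {1..n} \<Longrightarrow> 0 < c e y"
  using gvv_lt1 by (simp add: c_def)

lemma finite_D: "finite (D k e y)"
proof -
  have "D k e y \<subseteq> {xs. set xs \<subseteq> {1..n} \<and> length xs \<le> k}"
    by (auto simp: D_def direct_paths_def)
  then show ?thesis using finite_lists_length_le[of "{1..n}" k] finite_subset by blast
qed

lemma D_m: "D k e m = {}"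
  by (auto simp: D_def direct_paths_def)

lemma D_0: "D 0 e y = {}"
  by (auto simp: D_def direct_paths_def)

lemma pg_nonneg: "set ps \<subseteq> {1..n} \<Longrightarrow> 0 \<le> path_gain W \<beta> ps"
proof (induction ps)
  case Nil then show ?case by simp
next
  case (Cons x xs)
  show ?case
  proof (cases xs)
    case Nil then show ?thesis by simp
  next
    case (Cons z zs)
    have x: "x \<in> {1..n}" and z: "z \<in> {1..n}" using Cons.prems Cons by auto
    have "0 \<le> g z x / (1 - g x x)" using gain_nonneg[OF z x] gvv_lt1[OF x] by simp
    moreover have "0 \<le> path_gain W \<beta> xs" using Cons.IH Cons.prems by auto
    ultimately show ?thesis using Cons by (simp del: times_divide_eq_left)
  qed
qed

lemma D_e: "P k e e \<le> 1"
proof -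
  have sub: "D k e e \<subseteq> {[e]}"
  proof
    fix ps assume ps: "ps \<in> D k e e"
    then have ne: "ps \<noteq> []" and h: "hd ps = e" and l: "last ps = e" and d: "distinct ps"
      by (auto simp: D_def direct_paths_def)
    obtain x xs where px: "ps = x # xs" using ne by (cases ps) auto
    have "xs = []"
    proof (rule ccontr)
      assume "xs \<noteq> []"
      then have "last xs \<in> set xs" "last xs = x" using px h l by auto
      then show False using d px by auto
    qed
    then show "ps \<in> {[e]}" using px h by simp
  qed
  have "P k e e \<le> (\<Sum>ps\<in>{[e]}. path_gain W \<beta> ps)"
    unfolding P_def
    by (rule sum_mono2) (use sub in \<open>auto intro!: pg_nonneg simp: D_def direct_paths_def\<close>)
  then show ?thesis by simp
qed

lemma D_full: "D n e y = direct_paths n W \<beta> m e y"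
proof -
  have "length ps \<le> n" if "ps \<in> direct_paths n W \<beta> m e y" for ps
  proof -
    have "distinct ps" "set ps \<subseteq> {1..n}" using that by (auto simp: direct_paths_def)
    then have "card (set ps) \<le> card {1..n}" "card (set ps) = length ps"
      using card_mono[of "{1..n}" "set ps"] distinct_card[of ps] by auto
    then show ?thesis by simp
  qed
  then show ?thesis by (auto simp: D_def)
qed

lemma D_Suc_sub:
  assumes "y \<noteq> e"
  shows "D (Suc k) e y \<subseteq> (\<lambda>(u,qs). qs @ [y]) ` (SIGMA u:{1..n}-{y}. D k e u)"
proof
  fix ps assume ps: "ps \<in> D (Suc k) e y"
  then have ne: "ps \<noteq> []" and h: "hd ps = e" and l: "last ps = y" and d: "distinct ps"
    and st: "set ps \<subseteq> {1..n}" and mm: "m \<notin> set ps" and ch: "successively (sfg_branch W \<beta>) ps"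
    and len: "length ps \<le> Suc k"
    by (auto simp: D_def direct_paths_def chain_succ)
  define qs where "qs = butlast ps"
  have pq: "ps = qs @ [y]" using append_butlast_last_id[OF ne] l by (simp add: qs_def)
  have qne: "qs \<noteq> []" using pq h assms by auto
  define u where "u = last qs"
  have "u \<in> set qs" using qne by (simp add: u_def)
  then have u: "u \<in> {1..n} - {y}" using st d pq by auto
  have "qs \<in> D k e u"
    using qne h d st mm ch len pq
    by (auto simp: D_def direct_paths_def chain_succ u_def successively_append_iff)
  then show "ps \<in> (\<lambda>(u,qs). qs @ [y]) ` (SIGMA u:{1..n}-{y}. D k e u)"
    using u pq by force
qed

definition a where "a y u = g y u / (1 - g u u)"

lemma P_Suc_le:
  assumes y: "y \<in> {1..n}" and ye: "y \<noteq> e"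
  shows "P (Suc k) e y \<le> (\<Sum>u\<in>{1..n}-{y}. a y u * P k e u)"
proof -
  let ?f = "\<lambda>(u::nat,qs). qs @ [y]"
  let ?S = "SIGMA u:{1..n}-{y}. D k e u"
  have finS: "finite ?S" using finite_D by auto
  have "P (Suc k) e y \<le> (\<Sum>ps\<in>?f ` ?S. path_gain W \<beta> ps)"
    unfolding P_def
  proof (rule sum_mono2)
    show "finite (?f ` ?S)" using finS by simp
    show "D (Suc k) e y \<subseteq> ?f ` ?S" using D_Suc_sub[OF ye] .
    show "\<And>b. b \<in> ?f ` ?S - D (Suc k) e y \<Longrightarrow> 0 \<le> path_gain W \<beta> b"
      using y by (auto intro!: pg_nonneg simp: D_def direct_paths_def)
  qed
  also have "\<dots> \<le> (\<Sum>x\<in>?S. (path_gain W \<beta> \<circ> ?f) x)"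
    by (rule sum_image_le) (use finS y in \<open>auto intro!: pg_nonneg simp: D_def direct_paths_def\<close>)
  also have "\<dots> = (\<Sum>u\<in>{1..n}-{y}. \<Sum>qs\<in>D k e u. path_gain W \<beta> (qs @ [y]))"
    using sum.Sigma[of "{1..n}-{y}" "D k e" "\<lambda>u qs. path_gain W \<beta> (qs @ [y])"] finite_D
    by (simp add: comp_def case_prod_unfold)
  also have "\<dots> = (\<Sum>u\<in>{1..n}-{y}. \<Sum>qs\<in>D k e u. a y u * path_gain W \<beta> qs)"
  proof (rule sum.cong[OF refl], rule sum.cong[OF refl])
    fix u qs assume "qs \<in> D k e u"
    then have "qs \<noteq> []" "last qs = u" by (auto simp: D_def direct_paths_def)
    then show "path_gain W \<beta> (qs @ [y]) = a y u * path_gain W \<beta> qs"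
      using pg_snoc[of qs W \<beta> y] by (simp add: a_def)
  qed
  also have "\<dots> = (\<Sum>u\<in>{1..n}-{y}. a y u * P k e u)"
    by (simp add: P_def sum_distrib_left)
  finally show ?thesis .
qed

lemma a_nonneg: "y \<in> {1..n} \<Longrightarrow> u \<in> {1..n} \<Longrightarrow> 0 \<le> a y u"
proof -
  assume a: "y \<in> {1..n}" "u \<in> {1..n}"
  have "0 \<le> g y u" using gain_nonneg a by blast
  moreover have "0 < 1 - g u u" using gvv_lt1 a by simp
  ultimately show ?thesis by (simp add: a_def)
qed

lemma a_pos: assumes "y \<in> {1..n}" "u \<in> {1..n}" "(u, y) \<in> E" shows "0 < a y u"
proof -
  have "0 < W y u" using W_E assms by blast
  moreover have "0 < 1 - \<beta> y" using bspec[OF beta assms(1)] by simp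
  ultimately have "0 < g y u" by (simp add: gain_def)
  then show ?thesis using gvv_lt1[OF assms(2)] by (simp add: a_def)
qed

lemma bound_sum:
  assumes e: "e \<in> {1..n}" and y: "y \<in> {1..n}"
  shows "(\<Sum>u\<in>{1..n}-{y}. a y u * c e u) \<le> c e y"
proof -
  have de: "0 < 1 - g e e" using gvv_lt1[OF e] by simp
  have "(\<Sum>u\<in>{1..n}-{y}. a y u * c e u) = (\<Sum>u\<in>{1..n}-{y}. g y u) / (1 - g e e)"
    unfolding sum_divide_distrib
  proof (rule sum.cong[OF refl])
    fix u assume "u \<in> {1..n} - {y}"
    then have "1 - g u u \<noteq> 0" using gvv_lt1[of u] by auto
    then show "a y u * c e u = g y u / (1 - g e e)" by (simp add: a_def c_def)
  qed
  also have "(\<Sum>u\<in>{1..n}-{y}. g y u) = (1 - \<beta> y) * (1 - W y y)"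
  proof -
    have "(\<Sum>u\<in>{1..n}-{y}. g y u) = (1 - \<beta> y) * (\<Sum>u\<in>{1..n}-{y}. W y u)"
      by (simp add: gain_def sum_distrib_left)
    also have "(\<Sum>u\<in>{1..n}-{y}. W y u) = (\<Sum>u\<in>{1..n}. W y u) - W y y"
      using y by (simp add: sum_diff1)
    also have "(\<Sum>u\<in>{1..n}. W y u) = 1" using bspec[OF W_row y] by simp
    finally show ?thesis .
  qed
  also have "(1 - \<beta> y) * (1 - W y y) \<le> 1 - g y y"
    using bspec[OF beta y] by (simp add: gain_def algebra_simps)
  then have "(1 - \<beta> y) * (1 - W y y) / (1 - g e e) \<le> (1 - g y y) / (1 - g e e)"
    using de by (simp add: divide_right_mono)
  finally show ?thesis by (simp add: c_def)
qed

lemma P_le: "e \<in> {1..n} \<Longrightarrow> y \<in> {1..n} \<Longrightarrow> P k e y \<le> c e y"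
proof (induction k arbitrary: y)
  case 0
  then show ?case using c_pos by (simp add: P_def D_0 less_imp_le)
next
  case (Suc k)
  show ?case
  proof (cases "y = e")
    case True
    then have "c e y = 1" using gvv_lt1[OF Suc.prems(1)] by (simp add: c_def)
    then show ?thesis using D_e True by simp
  next
    case False
    have "P (Suc k) e y \<le> (\<Sum>u\<in>{1..n}-{y}. a y u * P k e u)" using P_Suc_le Suc.prems False by blast
    also have "\<dots> \<le> (\<Sum>u\<in>{1..n}-{y}. a y u * c e u)"
      by (rule sum_mono) (use Suc a_nonneg in \<open>auto intro: mult_left_mono\<close>)
    also have "\<dots> \<le> c e y" using bound_sum Suc.prems by blast
    finally show ?thesis .
  qed
qed

lemma P_lt_step:
  assumes e: "e \<in> {1..n}" and y: "y \<in> {1..n}" and ye: "y \<noteq> e"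
    and u0: "u0 \<in> {1..n}" "u0 \<noteq> y" "(u0, y) \<in> E" and lt: "P k e u0 < c e u0"
  shows "P (Suc k) e y < c e y"
proof -
  have "P (Suc k) e y \<le> (\<Sum>u\<in>{1..n}-{y}. a y u * P k e u)" using P_Suc_le y ye by blast
  also have "\<dots> < (\<Sum>u\<in>{1..n}-{y}. a y u * c e u)"
  proof (rule sum_strict_mono_ex1)
    show "finite ({1..n}-{y})" by simp
    show "\<forall>x\<in>{1..n}-{y}. a y x * P k e x \<le> a y x * c e x"
      using P_le e a_nonneg y by (auto intro: mult_left_mono)
    show "\<exists>x\<in>{1..n}-{y}. a y x * P k e x < a y x * c e x"
    proof
      show "u0 \<in> {1..n}-{y}" using u0 by simp
      show "a y u0 * P k e u0 < a y u0 * c e u0"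
        using lt a_pos[OF y u0(1) u0(3)] by (rule mult_strict_left_mono)
    qed
  qed
  also have "\<dots> \<le> c e y" using bound_sum e y by blast
  finally show ?thesis .
qed

lemma path_strict:
  assumes e: "e \<in> {1..n}" and sp: "simple_path E vs m f" and ne: "e \<notin> set vs"
  shows "P k e f < c e f"
proof -
  have vne: "vs \<noteq> []" and h: "hd vs = m" and l: "last vs = f" and d: "distinct vs"
    and ch: "\<And>j. Suc j < length vs \<Longrightarrow> (vs ! j, vs ! Suc j) \<in> E"
    using sp by (auto simp: simple_path_def chain_in_def)
  have inV: "vs ! j \<in> {1..n}" if "j < length vs" for j
  proof (cases j)
    case 0 then show ?thesis using vne h m_in by (simp add: hd_conv_nth[symmetric])
  next
    case (Suc j') then show ?thesis using ch[of j'] that E_sub by auto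
  qed
  have "\<forall>k. P k e (vs ! j) < c e (vs ! j)" if "j < length vs" for j
    using that
  proof (induction j)
    case 0
    have "vs ! 0 = m" using vne h by (simp add: hd_conv_nth[symmetric])
    then show ?case using c_pos[OF e m_in] by (simp add: P_def D_m)
  next
    case (Suc j)
    have y: "vs ! Suc j \<in> {1..n}" using inV Suc.prems by blast
    have u: "vs ! j \<in> {1..n}" using inV Suc.prems by simp
    have uy: "vs ! j \<noteq> vs ! Suc j" using d Suc.prems by (simp add: nth_eq_iff_index_eq)
    have ye: "vs ! Suc j \<noteq> e" using ne Suc.prems nth_mem by metis
    show ?case
    proof
      fix k show "P k e (vs ! Suc j) < c e (vs ! Suc j)"
      proof (cases k)
        case 0 then show ?thesis using c_pos[OF e y] by (simp add: P_def D_0)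
      next
        case (Suc k')
        then show ?thesis
          using P_lt_step[OF e y ye u uy ch[OF Suc.prems]] Suc.IH Suc.prems by simp
      qed
    qed
  qed
  moreover have "vs ! (length vs - 1) = f" using vne l by (simp add: last_conv_nth)
  ultimately show ?thesis using vne by (metis diff_less length_greater_0_conv zero_less_one)
qed

lemma part2:
  assumes e: "e \<in> {1..n}" and f: "f \<in> {1..n}"
  shows "(\<Sum>ps\<in>direct_paths n W \<beta> m e f. path_gain W \<beta> ps) \<le> (1 - g f f) / (1 - g e e)
      \<and> ((\<Sum>ps\<in>direct_paths n W \<beta> m e f. path_gain W \<beta> ps) = (1 - g f f) / (1 - g e e)
          \<longrightarrow> (\<forall>ps. simple_path E ps m f \<longrightarrow> e \<in> set ps))"
proof -
  have eq: "(\<Sum>ps\<in>direct_paths n W \<beta> m e f. path_gain W \<beta> ps) = P n e f"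
    by (simp add: P_def D_full)
  have le: "P n e f \<le> c e f" using P_le[OF e f] .
  show ?thesis unfolding eq
  proof (intro conjI impI allI)
    show "P n e f \<le> (1 - g f f) / (1 - g e e)" using le by (simp add: c_def)
    fix ps assume q: "P n e f = (1 - g f f) / (1 - g e e)" and sp: "simple_path E ps m f"
    show "e \<in> set ps"
    proof (rule ccontr)
      assume "e \<notin> set ps"
      then have "P n e f < c e f" using path_strict[OF e sp] by blast
      then show False using q by (simp add: c_def)
    qed
  qed
qed

end

theorem lemma3:
  fixes n :: nat and W :: "nat \<Rightarrow> nat \<Rightarrow> real" and \<beta> :: "nat \<Rightarrow> real"
    and E :: "(nat \<times> nat) set" and m s1 s2 :: nat
  assumes E_sub: "E \<subseteq> {1..n} \<times> {1..n}"
    and W_E: "\<forall>i\<in>{1..n}. \<forall>j\<in>{1..n}. (0 < W i j \<longleftrightarrow> (j, i) \<in> E)"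
    and W_nonneg: "\<forall>i\<in>{1..n}. \<forall>j\<in>{1..n}. 0 \<le> W i j"
    and W_row: "\<forall>i\<in>{1..n}. (\<Sum>j=1..n. W i j) = 1"
    and beta_range: "\<forall>i\<in>{1..n}. 0 \<le> \<beta> i \<and> \<beta> i \<le> 1"
    and s_in: "s1 \<in> {1..n}" "s2 \<in> {1..n}" "s1 \<noteq> s2"
    and s_beta: "0 < \<beta> s1" "\<beta> s1 < 1" "0 < \<beta> s2" "\<beta> s2 < 1"
    and others: "\<forall>i\<in>{1..n}. i \<noteq> s1 \<and> i \<noteq> s2 \<longrightarrow> \<beta> i = 0"
    and C1: "type_C1 n E m"
  shows
    "(\<forall>s\<in>{s1, s2}. \<forall>e\<in>{1..n}.
        (\<Sum>ps\<in>direct_paths n W \<beta> m s e. \<beta> s * path_gain W \<beta> ps)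
          \<le> \<beta> s * (1 - gain W \<beta> e e) / (1 - gain W \<beta> s s)
      \<and> ((\<Sum>ps\<in>direct_paths n W \<beta> m s e. \<beta> s * path_gain W \<beta> ps)
            = \<beta> s * (1 - gain W \<beta> e e) / (1 - gain W \<beta> s s)
          \<longrightarrow> (\<forall>ps. simple_path E ps m e \<longrightarrow> s \<in> set ps)))
   \<and> (\<forall>e\<in>{1..n}. \<forall>f\<in>{1..n}.
        (\<Sum>ps\<in>direct_paths n W \<beta> m e f. path_gain W \<beta> ps)
          \<le> (1 - gain W \<beta> f f) / (1 - gain W \<beta> e e)
      \<and> ((\<Sum>ps\<in>direct_paths n W \<beta> m e f. path_gain W \<beta> ps)
            = (1 - gain W \<beta> f f) / (1 - gain W \<beta> e e)
          \<longrightarrow> (\<forall>ps. simple_path E ps m f \<longrightarrow> e \<in> set ps)))"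
  proof -
  have beta: "\<forall>i\<in>{1..n}. 0 \<le> \<beta> i \<and> \<beta> i < 1"
    using beta_range others s_beta by fastforce
  have n2: "2 \<le> n" using s_in by auto
  interpret fj n W \<beta> E m
    by unfold_locales (use E_sub W_E W_nonneg W_row beta n2 C1 in \<open>auto simp: type_C1_def\<close>)
  have P2: "\<forall>e\<in>{1..n}. \<forall>f\<in>{1..n}.
        (\<Sum>ps\<in>direct_paths n W \<beta> m e f. path_gain W \<beta> ps)
          \<le> (1 - gain W \<beta> f f) / (1 - gain W \<beta> e e)
      \<and> ((\<Sum>ps\<in>direct_paths n W \<beta> m e f. path_gain W \<beta> ps)
            = (1 - gain W \<beta> f f) / (1 - gain W \<beta> e e)
          \<longrightarrow> (\<forall>ps. simple_path E ps m f \<longrightarrow> e \<in> set ps))"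
    using part2 by blast
  have P1: "(\<Sum>ps\<in>direct_paths n W \<beta> m s e. \<beta> s * path_gain W \<beta> ps)
          \<le> \<beta> s * (1 - gain W \<beta> e e) / (1 - gain W \<beta> s s)
      \<and> ((\<Sum>ps\<in>direct_paths n W \<beta> m s e. \<beta> s * path_gain W \<beta> ps)
            = \<beta> s * (1 - gain W \<beta> e e) / (1 - gain W \<beta> s s)
          \<longrightarrow> (\<forall>ps. simple_path E ps m e \<longrightarrow> s \<in> set ps))"
    if s: "s \<in> {s1, s2}" and e: "e \<in> {1..n}" for s e
  proof -
    have sn: "s \<in> {1..n}" and bs: "0 < \<beta> s" using s s_in s_beta by auto
    have h: "(\<Sum>ps\<in>direct_paths n W \<beta> m s e. \<beta> s * path_gain W \<beta> ps)
       = \<beta> s * (\<Sum>ps\<in>direct_paths n W \<beta> m s e. path_gain W \<beta> ps)"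
      by (simp add: sum_distrib_left)
    have r: "\<beta> s * (1 - gain W \<beta> e e) / (1 - gain W \<beta> s s)
       = \<beta> s * ((1 - gain W \<beta> e e) / (1 - gain W \<beta> s s))" by simp
    define S where "S = (\<Sum>ps\<in>direct_paths n W \<beta> m s e. path_gain W \<beta> ps)"
    define R where "R = (1 - gain W \<beta> e e) / (1 - gain W \<beta> s s)"
    have Q: "S \<le> R" "S = R \<longrightarrow> (\<forall>ps. simple_path E ps m e \<longrightarrow> s \<in> set ps)"
      using P2 sn e unfolding S_def R_def by blast+
    have "\<beta> s * S \<le> \<beta> s * R" using Q(1) bs by (simp add: mult_left_mono)
    moreover have "\<beta> s * S = \<beta> s * R \<Longrightarrow> S = R" using bs by simp
    ultimately show ?thesis unfolding h r S_def[symmetric] R_def[symmetric] using Q(2) by blast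
  qed
  show ?thesis using P1 P2 by blast
qed

end
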